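(* For every $n\ge1$, the Zimin word $Z_n$ is an involutory isoterm relative to $\mathcal{K}_3^\rho$. That is, if $w$ is an involutory word such that the identity $Z_n\approx w$ holds in $\mathcal{K}_3^\rho$, then $w=Z_n$.
   Context: $\mathcal{K}_3$ is the monoid presented by generators $c,h_1,h_2$ and relations $h_1h_2h_1=h_1$, $h_2h_1h_2=h_2$, and $h_i^2=ch_i=h_ic$ for $i=1,2$. $\mathcal{K}_3^\rho$ is $\mathcal{K}_3$ regarded as an involution semigroup under the rotation ${}^\rho$, which is the unique involutory anti-automorphism fixing $c$ and swapping $h_1\leftrightarrow h_2$. Zimin words are defined by $Z_1=x_1$ and $Z_{n+1}=Z_nx_{n+1}Z_n$. Involutory words over $X$ are elements of the free semigroup on $X\cup\{x^\star\mid x\in X\}$, with involution $(x_1\cdots x_m)^\star=x_m^\star\cdots x_1^\star$ and $(x^\star)^\star=x$; an identity $u\approx v$ between involutory words holds in $\mathcal{K}_3^\rho$ if both sides agree under every assignment of elements to letters, with $x^\star$ interpreted via ${}^\rho$. *)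

theory Defs
  imports Main
begin

text \<open>Generators c, h1, h2. Elements of the free monoid are lists of generators;
K_3 is the quotient of the free monoid by the congruence generated by the defining
relations.\<close>

datatype gen = C | H1 | H2

inductive krel :: "gen list \<Rightarrow> gen list \<Rightarrow> bool" where
  "krel [H1, H2, H1] [H1]"
| "krel [H2, H1, H2] [H2]"
| "krel [H1, H1] [C, H1]"
| "krel [C, H1] [H1, C]"
| "krel [H2, H2] [C, H2]"
| "krel [C, H2] [H2, C]"

inductive kstep :: "gen list \<Rightarrow> gen list \<Rightarrow> bool" where
  "krel l r \<Longrightarrow> kstep (p @ l @ q) (p @ r @ q)"

definition keq :: "gen list \<Rightarrow> gen list \<Rightarrow> bool" where
  "keq = equivclp kstep"

fun swap_gen :: "gen \<Rightarrow> gen" where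
  "swap_gen C = C" | "swap_gen H1 = H2" | "swap_gen H2 = H1"

definition rho :: "gen list \<Rightarrow> gen list" where
  "rho w = rev (map swap_gen w)"

datatype 'a ilet = Pos 'a | Star 'a

definition iword :: "'a ilet list \<Rightarrow> bool" where
  "iword w \<longleftrightarrow> w \<noteq> []"

text \<open>Value of an involutory word in K_3^rho under an assignment of elements
(given by representative words) to letters.\<close>
definition keval :: "('a \<Rightarrow> gen list) \<Rightarrow> 'a ilet list \<Rightarrow> gen list" where
  "keval \<sigma> w = concat (map (\<lambda>l. case l of Pos x \<Rightarrow> \<sigma> x | Star x \<Rightarrow> rho (\<sigma> x)) w)"

definition holds_K3rho :: "'a ilet list \<Rightarrow> 'a ilet list \<Rightarrow> bool" where
  "holds_K3rho u v \<longleftrightarrow> (\<forall>\<sigma>. keq (keval \<sigma> u) (keval \<sigma> v))"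

fun zimin :: "nat \<Rightarrow> nat ilet list" where
  "zimin 0 = []"
| "zimin (Suc n) = zimin n @ [Pos (Suc n)] @ zimin n"

end

theory Submission
  imports Defs
begin

type_synonym M = "nat \<times> (bool \<times> bool) option"

fun mult :: "M \<Rightarrow> M \<Rightarrow> M" where
  "mult (k1, None) (k2, s) = (k1 + k2, s)"
| "mult (k1, s) (k2, None) = (k1 + k2, s)"
| "mult (k1, Some (i, j)) (k2, Some (p, q)) = (k1 + k2 + (if j = p then 1 else 0), Some (i, q))"

lemma opt_cases: obtains "s = None" | i j where "s = Some (i, j)"
  by (cases s) auto

lemma mult_assoc: "mult (mult a b) c = mult a (mult b c)"
proof -
  obtain k1 s1 k2 s2 k3 s3 where "a = (k1, s1)" "b = (k2, s2)" "c = (k3, s3)"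
    by (metis prod.exhaust)
  then show ?thesis
    by (cases s1 rule: opt_cases; cases s2 rule: opt_cases; cases s3 rule: opt_cases) auto
qed

lemma mult_one_left[simp]: "mult (0, None) a = a"
  by (cases a) auto

lemma mult_one_right[simp]: "mult a (0, None) = a"
proof -
  obtain k s where "a = (k, s)" by (metis prod.exhaust)
  then show ?thesis by (cases s rule: opt_cases) auto
qed

fun gv :: "gen \<Rightarrow> M" where
  "gv C = (1, None)" | "gv H1 = (0, Some (True, True))" | "gv H2 = (0, Some (False, False))"

definition ev :: "gen list \<Rightarrow> M" where
  "ev l = foldr (\<lambda>g acc. mult (gv g) acc) l (0, None)"

lemma ev_simps[simp]: "ev [] = (0, None)" "ev (g # l) = mult (gv g) (ev l)"
  by (simp_all add: ev_def)

lemma ev_append[simp]: "ev (u @ v) = mult (ev u) (ev v)"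
  by (induction u) (simp_all add: mult_assoc)

lemma krel_ev: "krel l r \<Longrightarrow> ev l = ev r"
  by (induction rule: krel.induct) auto

lemma kstep_ev: "kstep l r \<Longrightarrow> ev l = ev r"
  by (induction rule: kstep.induct) (simp add: krel_ev)

lemma keq_ev: assumes "keq u v" shows "ev u = ev v"
proof -
  have "(symclp kstep)\<^sup>*\<^sup>* u v" using assms by (simp add: keq_def equivclp_def)
  then show ?thesis
  proof (induction rule: rtranclp_induct)
    case base then show ?case by simp
  next
    case (step y z)
    then show ?case by (auto simp: symclp_def dest: kstep_ev)
  qed
qed

definition bv :: "bool \<Rightarrow> M" where "bv b = (0, Some (b, b))"

definition val :: "bool list \<Rightarrow> M" where
  "val bs = foldr (\<lambda>b acc. mult (bv b) acc) bs (0, None)"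

lemma val_simps[simp]: "val [] = (0, None)" "val (b # l) = mult (bv b) (val l)"
  by (simp_all add: val_def)

lemma val_append[simp]: "val (u @ v) = mult (val u) (val v)"
  by (induction u) (simp_all add: mult_assoc)

fun adj :: "bool list \<Rightarrow> nat" where
  "adj [] = 0" | "adj [b] = 0" | "adj (b # c # r) = (if b = c then 1 else 0) + adj (c # r)"

lemma val_ne: "bs \<noteq> [] \<Longrightarrow> val bs = (adj bs, Some (hd bs, last bs))"
  by (induction bs rule: adj.induct) (auto simp: bv_def)

lemma adj_le: "adj bs \<le> length bs - 1"
  by (induction bs rule: adj.induct) auto

lemma adj_max: "adj bs = length bs - 1 \<Longrightarrow> x \<in> set bs \<Longrightarrow> x = hd bs"
proof (induction bs rule: adj.induct)
  case (3 b c r)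
  have "adj (c # r) \<le> length r" using adj_le[of "c # r"] by simp
  then have "b = c" and "adj (c # r) = length (c # r) - 1" using 3(2) by (auto split: if_splits)
  then show ?case using 3 by auto
qed auto

lemma keval_Nil[simp]: "keval \<sigma> [] = []" by (simp add: keval_def)
lemma keval_Cons[simp]: "keval \<sigma> (l # u) = (case l of Pos x \<Rightarrow> \<sigma> x | Star x \<Rightarrow> rho (\<sigma> x)) @ keval \<sigma> u"
  by (simp add: keval_def)
lemma keval_append[simp]: "keval \<sigma> (u @ v) = keval \<sigma> u @ keval \<sigma> v"
  by (simp add: keval_def)

definition proj :: "nat \<Rightarrow> nat ilet list \<Rightarrow> bool list" where
  "proj y l = concat (map (\<lambda>l. case l of Pos x \<Rightarrow> if x = y then [True] else [] | Star x \<Rightarrow> if x = y then [False] else []) l)"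

lemma proj_simps[simp]: "proj y [] = []"
  "proj y (Pos x # l) = (if x = y then [True] else []) @ proj y l"
  "proj y (Star x # l) = (if x = y then [False] else []) @ proj y l"
  "proj y (u @ v) = proj y u @ proj y v"
  by (simp_all add: proj_def)

definition alt :: "nat ilet list \<Rightarrow> bool list" where
  "alt l = map (\<lambda>l. case l of Pos x \<Rightarrow> x = 1 | Star x \<Rightarrow> x \<noteq> 1) l"

lemma alt_simps[simp]: "alt [] = []" "alt (Pos x # l) = (x = 1) # alt l"
  "alt (Star x # l) = (x \<noteq> 1) # alt l" "alt (u @ v) = alt u @ alt v"
  by (simp_all add: alt_def)

lemma ev_C: "ev (keval (\<lambda>x. if x = y then [C] else []) l) = (length (proj y l), None)"
  by (induction l) (auto split: ilet.splits simp: rho_def)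

lemma ev_H: "ev (keval (\<lambda>x. if x = y then [H1] else []) l) = val (proj y l)"
  by (induction l) (auto split: ilet.splits simp: rho_def bv_def)

lemma ev_A: "ev (keval (\<lambda>x. if x = 1 then [H1] else [H2]) l) = val (alt l)"
  by (induction l) (auto split: ilet.splits simp: rho_def bv_def)

lemma zimin_pos: "l \<in> set (zimin n) \<Longrightarrow> \<exists>k. l = Pos k \<and> 1 \<le> k \<and> k \<le> n"
  by (induction n) auto

lemma proj_zimin_true: "set (proj y (zimin n)) \<subseteq> {True}"
  by (induction n) auto

lemma proj_zimin_0: "proj 0 (zimin n) = []"
  by (induction n) auto

lemma val_alt_zimin: "val (alt (zimin (Suc n))) = (0, Some (True, True))"
proof (induction n)
  case 0 then show ?case by (simp add: bv_def)
next
  case (Suc n)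
  have "zimin (Suc (Suc n)) = zimin (Suc n) @ [Pos (Suc (Suc n))] @ zimin (Suc n)"
    by (simp only: zimin.simps)
  then show ?case using Suc by (simp del: zimin.simps add: bv_def)
qed

definition del :: "nat ilet list \<Rightarrow> nat ilet list" where
  "del l = map (\<lambda>l. case l of Pos k \<Rightarrow> Pos (k - 1) | Star k \<Rightarrow> Star k) (filter (\<lambda>l. l \<noteq> Pos 1) l)"

fun sh :: "nat ilet \<Rightarrow> nat ilet" where
  "sh (Pos k) = Pos (k + 1)" | "sh (Star k) = Star (k + 1)"

definition ins :: "nat ilet list \<Rightarrow> nat ilet list" where
  "ins l = Pos 1 # concat (map (\<lambda>a. [sh a, Pos 1]) l)"

lemma del_zimin: "del (zimin (Suc n)) = zimin n"
  by (induction n) (auto simp: del_def)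

lemma ins_zimin: "ins (zimin n) = zimin (Suc n)"
  by (induction n) (auto simp: ins_def)

lemma keval_del: "(\<forall>l\<in>set u. \<exists>k\<ge>1. l = Pos k) \<Longrightarrow>
  keval (\<lambda>k. if k = 1 then [] else \<sigma>' (k - 1)) u = keval \<sigma>' (del u)"
  by (induction u) (auto simp: del_def)

lemma alt_struct:
  assumes "\<forall>l\<in>set w. \<exists>k\<ge>1. l = Pos k" "w \<noteq> []" "adj (alt w) = 0"
    "hd (alt w) = True" "last (alt w) = True"
  shows "w = ins (del w)"
  using assms
proof (induction "length w" arbitrary: w rule: less_induct)
  case less
  obtain x r where w: "w = x # r" using less(3) by (cases w) auto
  have x: "x = Pos 1" using less(2,5) w by (auto simp: alt_def)
  show ?case
  proof (cases r)
    case Nil then show ?thesis using w x by (simp add: del_def ins_def)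
  next
    case (Cons y r')
    obtain k where k: "y = Pos k" "k \<ge> 1" using less(2) w Cons by auto
    have k1: "k \<noteq> 1" using less(4) w x Cons k by (auto simp: alt_def split: if_splits)
    have r'ne: "r' \<noteq> []" using less(6) w Cons k k1 x by (auto simp: alt_def)
    obtain z r'' where r': "r' = z # r''" using r'ne by (cases r') auto
    have a1: "adj (alt r') = 0" "hd (alt r') = True"
      using less(4) w x Cons k k1 r' by (auto simp: alt_def split: if_splits ilet.splits)
    have a2: "last (alt r') = True" using less(6) w Cons r' by (auto simp: alt_def)
    have IH: "r' = ins (del r')"
      using less(1)[of r'] less(2) w Cons r'ne a1 a2 by auto
    have "del w = Pos (k - 1) # del r'" using w x Cons k k1 by (simp add: del_def)
    then have "ins (del w) = Pos 1 # Pos k # ins (del r')" using k by (simp add: ins_def)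
    then show ?thesis using IH w x Cons k by simp
  qed
qed

lemma proj_mem: "x \<in> set w \<Longrightarrow> (x = Pos y \<longrightarrow> True \<in> set (proj y w)) \<and> (x = Star y \<longrightarrow> False \<in> set (proj y w))"
proof (induction w)
  case (Cons a w) then show ?case by (cases a) auto
qed simp

lemma proj_mem_cons: "proj y (a # z) = proj y [a] @ proj y z"
  by (simp add: proj_def)

lemma proj_ne: "proj y z \<noteq> [] \<Longrightarrow> \<exists>x\<in>set z. x = Pos y \<or> x = Star y"
proof (induction z)
  case (Cons a z) then show ?case by (cases a) (auto split: if_splits)
qed simp

lemma val_allT: "set bs \<subseteq> {True} \<Longrightarrow> bs \<noteq> [] \<Longrightarrow> val bs = (length bs - 1, Some (True, True))"
proof (induction bs)
  case (Cons b bs) then show ?case by (cases bs) (auto simp: bv_def)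
qed simp

lemma common:
  assumes h: "holds_K3rho (zimin (Suc n)) w"
  shows "(\<forall>l\<in>set w. \<exists>k. l = Pos k \<and> 1 \<le> k \<and> k \<le> Suc n) \<and> w = ins (del w)"
proof -
  let ?z = "zimin (Suc n)"
  have len: "length (proj y w) = length (proj y ?z)" for y
    using keq_ev[OF h[unfolded holds_K3rho_def, rule_format, of "\<lambda>x. if x = y then [C] else []"]]
    by (simp add: ev_C del: zimin.simps)
  have vH: "val (proj y w) = val (proj y ?z)" for y
    using keq_ev[OF h[unfolded holds_K3rho_def, rule_format, of "\<lambda>x. if x = y then [H1] else []"]]
    by (simp add: ev_H del: zimin.simps)
  have pos: "\<exists>k. l = Pos k \<and> 1 \<le> k \<and> k \<le> Suc n" if l: "l \<in> set w" for l
  proof -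
    obtain y where ly: "l = Pos y \<or> l = Star y" by (cases l) auto
    have pw: "proj y w \<noteq> []" using proj_mem[OF l, of y] ly by auto
    then have ne: "proj y ?z \<noteq> []" using len by (metis length_0_conv)
    then obtain x where "x \<in> set ?z" "x = Pos y \<or> x = Star y" using proj_ne by blast
    then have y: "1 \<le> y \<and> y \<le> Suc n" using zimin_pos by fastforce
    have "val (proj y ?z) = (length (proj y ?z) - 1, Some (True, True))"
      using val_allT[OF proj_zimin_true ne] .
    then have "val (proj y w) = (length (proj y w) - 1, Some (True, True))" using vH len by simp
    then have a: "adj (proj y w) = length (proj y w) - 1" and hdT: "hd (proj y w) = True"
      using val_ne[OF pw] by auto
    have "l \<noteq> Star y"
    proof
      assume "l = Star y"
      then have "False \<in> set (proj y w)" using proj_mem[OF l, of y] by auto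
      then show False using adj_max[OF a] hdT by force
    qed
    then show ?thesis using ly y by auto
  qed
  have "val (alt w) = (0, Some (True, True))"
    using keq_ev[OF h[unfolded holds_K3rho_def, rule_format, of "\<lambda>x. if x = 1 then [H1] else [H2]"]]
    unfolding ev_A val_alt_zimin by simp
  moreover then have wne: "w \<noteq> []" by auto
  ultimately have "adj (alt w) = 0" "hd (alt w) = True" "last (alt w) = True"
  proof -
    have "alt w \<noteq> []" using wne by (simp add: alt_def)
    from val_ne[OF this] \<open>val (alt w) = _\<close>
    show "adj (alt w) = 0" "hd (alt w) = True" "last (alt w) = True" by auto
  qed
  then have "w = ins (del w)" using alt_struct[OF _ wne] pos by blast
  then show ?thesis using pos by blast
qed

lemma main:
  assumes "holds_K3rho (zimin (Suc n)) w"
  shows "w = zimin (Suc n)"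
  using assms
proof (induction n arbitrary: w)
  case 0
  from common[OF 0] have p: "\<forall>l\<in>set w. l = Pos 1" and e: "w = ins (del w)" by auto
  have "del w = []" using p by (auto simp: del_def filter_empty_conv)
  then show ?case using e by (simp add: ins_def)
next
  case (Suc n w)
  from common[OF Suc.prems] have p: "\<forall>l\<in>set w. \<exists>k\<ge>1. l = Pos k" and e: "w = ins (del w)" by auto
  have "holds_K3rho (zimin (Suc n)) (del w)"
    unfolding holds_K3rho_def
  proof
    fix \<sigma>' :: "nat \<Rightarrow> gen list"
    let ?\<sigma> = "\<lambda>k. if k = 1 then [] else \<sigma>' (k - 1)"
    have k: "keq (keval ?\<sigma> (zimin (Suc (Suc n)))) (keval ?\<sigma> w)"
      using Suc.prems unfolding holds_K3rho_def by blast
    have zp: "\<forall>l\<in>set (zimin (Suc (Suc n))). \<exists>k\<ge>1. l = Pos k" using zimin_pos by blast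
    show "keq (keval \<sigma>' (zimin (Suc n))) (keval \<sigma>' (del w))"
      using k unfolding keval_del[OF zp] keval_del[OF p] del_zimin .
  qed
  then have "del w = zimin (Suc n)" using Suc.IH by blast
  then show ?case using e ins_zimin by metis
qed

theorem mainTheorem9:
  fixes n :: nat and w :: "nat ilet list"
  assumes "n \<ge> 1" and "iword w" and "holds_K3rho (zimin n) w"
  shows "w = zimin n"
  using main[of "n - 1" w] assms by simp

end
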